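(* Let $h>0$, $N\in\mathbb{N}$, $\mu>0$, $\alpha,\beta\in[0,1/2]$, and let $L_d:\mathbb{R}^d\times\mathbb{R}^d\to\mathbb{R}$ be $C^1$. Let $\gamma(z)=\rho(z)/\sigma(z)$ with $\rho_0/\sigma_0>0$ (e.g. $\gamma=\gamma_p$, $\gamma_p(z)=\sum_{j=1}^p\frac1j(1-z)^j$) and for real $a$ let $\omega^{(a)}_n$ be the Taylor coefficients of $(\gamma(z)/h)^{-a}$; define $\mathcal{J}_{-}^{a}x_k=\sum_{n=0}^{k}\omega_n^{(a)}x_{k-n}$, $\mathcal{J}_{+}^{a}y_k=\sum_{n=0}^{N-k}\omega_n^{(a)}y_{k+n}$. For sequences $x_d=(x_k)_{k=0}^N$, $y_d=(y_k)_{k=0}^N$ in $\mathbb{R}^d$ define the discrete action $$\mathcal{S}_d(x_d,y_d)=\sum_{k=0}^{N-1}\big(L_d(x_k,x_{k+1})+L_d(y_k,y_{k+1})\big)-\mu h\sum_{k=0}^{N}\mathcal{J}_{-}^{-\alpha}x_k\cdot\mathcal{J}_{+}^{-\beta}y_k .$$ Suppose $x_d,y_d$ satisfy, for all $k=1,\dots,N-1$, $$D_1L_d(x_k,x_{k+1})+D_2L_d(x_{k-1},x_k)=\mu h\,\mathcal{J}_{-}^{-(\alpha+\beta)}x_k,\qquad D_1L_d(y_k,y_{k+1})+D_2L_d(y_{k-1},y_k)=\mu h\,\mathcal{J}_{+}^{-(\alpha+\beta)}y_k,$$ where $D_i$ denotes the gradient with respect to the $i$-th argument. Then $(x_d,y_d)$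 is an extremal of $\mathcal{S}_d$ under restricted variations: for every sequence $(\delta x_k)_{k=0}^N$ in $\mathbb{R}^d$ with $\delta x_0=\delta x_N=0$, $$\frac{d}{d\epsilon}\Big|_{\epsilon=0}\mathcal{S}_d\big((x_k+\epsilon\delta x_k)_k,(y_k+\epsilon\delta x_k)_k\big)=0.$$
   Context: Restricted variations: the same variation $\delta x$ is applied to both doubled variables $x$ and $y$. $\mathcal{J}^{-\alpha}_{\pm}$ are convolution-quadrature approximations of left/right Riemann–Liouville fractional derivatives; the choice $\gamma_1(z)=1-z$ gives Grünwald–Letnikov weights. *)

theory Defs
  imports "HOL-Analysis.Analysis" "HOL-Computational_Algebra.Polynomial"
begin

definition gamma_fun :: "real poly \<Rightarrow> real poly \<Rightarrow> real \<Rightarrow> real" where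
  "gamma_fun \<rho> \<sigma> z = poly \<rho> z / poly \<sigma> z"

definition omega :: "real poly \<Rightarrow> real poly \<Rightarrow> real \<Rightarrow> real \<Rightarrow> nat \<Rightarrow> real" where
  "omega \<rho> \<sigma> h a n =
     (deriv ^^ n) (\<lambda>z. (gamma_fun \<rho> \<sigma> z / h) powr (- a)) 0 / fact n"

definition Jminus :: "real poly \<Rightarrow> real poly \<Rightarrow> real \<Rightarrow> real \<Rightarrow> (nat \<Rightarrow> 'a::real_vector) \<Rightarrow> nat \<Rightarrow> 'a" where
  "Jminus \<rho> \<sigma> h a x k = (\<Sum>n=0..k. omega \<rho> \<sigma> h a n *\<^sub>R x (k - n))"

definition Jplus :: "real poly \<Rightarrow> real poly \<Rightarrow> real \<Rightarrow> nat \<Rightarrow> real \<Rightarrow> (nat \<Rightarrow> 'a::real_vector) \<Rightarrow> nat \<Rightarrow> 'a" where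
  "Jplus \<rho> \<sigma> h N a y k = (\<Sum>n=0..N - k. omega \<rho> \<sigma> h a n *\<^sub>R y (k + n))"

definition action :: "('a::euclidean_space \<Rightarrow> 'a \<Rightarrow> real) \<Rightarrow> real poly \<Rightarrow> real poly \<Rightarrow> real \<Rightarrow> nat
    \<Rightarrow> real \<Rightarrow> real \<Rightarrow> real \<Rightarrow> (nat \<Rightarrow> 'a) \<Rightarrow> (nat \<Rightarrow> 'a) \<Rightarrow> real" where
  "action L \<rho> \<sigma> h N \<mu> \<alpha> \<beta> x y =
     (\<Sum>k<N. L (x k) (x (Suc k)) + L (y k) (y (Suc k)))
     - \<mu> * h * (\<Sum>k=0..N. Jminus \<rho> \<sigma> h (- \<alpha>) x k \<bullet> Jplus \<rho> \<sigma> h N (- \<beta>) y k)"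

end

theory Submission
  imports Defs "HOL-Complex_Analysis.Complex_Analysis"
begin


lemma real_link:
  fixes F :: "complex \<Rightarrow> complex" and f :: "real \<Rightarrow> real"
  assumes holF: "F holomorphic_on S" and oS: "open S" and oT: "open T"
    and TS: "\<And>x. x \<in> T \<Longrightarrow> complex_of_real x \<in> S"
    and eq: "\<And>x. x \<in> T \<Longrightarrow> F (of_real x) = of_real (f x)"
  shows "x \<in> T \<Longrightarrow> (deriv ^^ n) F (of_real x) = of_real ((deriv ^^ n) f x)"
proof (induction n arbitrary: x)
  case 0
  then show ?case using eq by simp
next
  case (Suc n x)
  define Fn where "Fn = (deriv ^^ n) F"
  have hol: "Fn holomorphic_on S" unfolding Fn_def using holF oS by (rule holomorphic_higher_deriv)
  define c where "c = deriv Fn (of_real x)"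
  have d1: "(Fn has_field_derivative c) (at (of_real x))"
    unfolding c_def using holomorphic_derivI[OF hol oS TS[OF Suc.prems]] .
  have d2: "((\<lambda>t. Fn (of_real t)) has_vector_derivative c) (at x)"
    using has_vector_derivative_real_field[OF d1] .
  have dRe: "((\<lambda>t. Re (Fn (of_real t))) has_field_derivative Re c) (at x)"
    using has_field_derivative_Re[OF d2] .
  have dIm: "((\<lambda>t. Im (Fn (of_real t))) has_field_derivative Im c) (at x)"
    using has_field_derivative_Im[OF d2] .
  have dRe': "((deriv ^^ n) f has_field_derivative Re c) (at x)"
    by (rule has_field_derivative_transform_within_open[OF dRe oT Suc.prems])
       (simp add: Fn_def Suc.IH)
  have dIm': "((\<lambda>t. 0) has_field_derivative Im c) (at x)"
    by (rule has_field_derivative_transform_within_open[OF dIm oT Suc.prems])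
       (simp add: Fn_def Suc.IH)
  have "Im c = 0" using DERIV_unique[OF dIm' DERIV_const] by simp
  then have "c = of_real (Re c)" by (simp add: complex_eq_iff)
  moreover have "deriv ((deriv ^^ n) f) x = Re c" using DERIV_imp_deriv[OF dRe'] .
  ultimately show ?case by (simp add: c_def Fn_def)
qed

lemma omega_conv:
  assumes h: "h > 0" and g0: "poly \<rho> 0 / poly \<sigma> 0 > 0"
  shows "omega \<rho> \<sigma> h (a + b) n = (\<Sum>i=0..n. omega \<rho> \<sigma> h a i * omega \<rho> \<sigma> h b (n - i))"
proof -
  define \<rho>c where "\<rho>c = (map_poly of_real \<rho> :: complex poly)"
  define \<sigma>c where "\<sigma>c = (map_poly of_real \<sigma> :: complex poly)"
  have pr: "poly \<rho>c (of_real x) = of_real (poly \<rho> x)" for x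
    unfolding \<rho>c_def by (induction \<rho>) (auto simp: map_poly_pCons)
  have ps: "poly \<sigma>c (of_real x) = of_real (poly \<sigma> x)" for x
    unfolding \<sigma>c_def by (induction \<sigma>) (auto simp: map_poly_pCons)
  define G where "G z = poly \<rho>c z / poly \<sigma>c z / of_real h" for z
  define F where "F c z = G z powr of_real (- c)" for c z
  define f where "f c = (\<lambda>z. (gamma_fun \<rho> \<sigma> z / h) powr (- c))" for c
  define S where "S = {z. 0 < Re (poly \<rho>c z * cnj (poly \<sigma>c z))}"
  define T where "T = {x::real. 0 < poly \<rho> x * poly \<sigma> x}"
  have oS: "open S" unfolding S_def
    by (intro open_Collect_less continuous_intros) 
  have oT: "open T" unfolding T_def
    by (intro open_Collect_less continuous_intros) 
  have TS: "complex_of_real x \<in> S" if "x \<in> T" for x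
    using that by (simp add: S_def T_def pr ps)
  have SRe: "Re (G z) > 0" "poly \<sigma>c z \<noteq> 0" if "z \<in> S" for z
  proof -
    have pos: "0 < Re (poly \<rho>c z * cnj (poly \<sigma>c z))" using that by (simp add: S_def)
    then show nz: "poly \<sigma>c z \<noteq> 0" by auto
    have "G z = poly \<rho>c z * cnj (poly \<sigma>c z) / of_real (h * (cmod (poly \<sigma>c z))^2)"
    proof -
      have e: "complex_of_real ((cmod (poly \<sigma>c z))^2) = poly \<sigma>c z * cnj (poly \<sigma>c z)"
        using complex_norm_square[of "poly \<sigma>c z"] by (metis of_real_power)
      have "cnj (poly \<sigma>c z) \<noteq> 0" using nz by simp
      then show ?thesis using nz h unfolding of_real_mult e by (simp add: G_def field_simps)
    qed
    then show "Re (G z) > 0" using pos h nz by (simp add: Re_divide_of_real)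
  qed
  have holF: "F c holomorphic_on S" for c
    unfolding F_def G_def
  proof (intro holomorphic_on_powr holomorphic_intros poly_holomorphic_on)
    fix z assume "z \<in> S"
    then show "poly \<sigma>c z \<noteq> 0" using SRe by blast
    show "poly \<rho>c z / poly \<sigma>c z / complex_of_real h \<notin> \<real>\<^sub>\<le>\<^sub>0"
      using SRe(1)[OF \<open>z \<in> S\<close>] unfolding G_def by (auto simp: nonpos_Reals_def Reals_def)
  qed (use h in auto)
  have eqF: "F c (of_real x) = of_real (f c x)" if "x \<in> T" for c x
  proof -
    have "G (of_real x) = of_real (gamma_fun \<rho> \<sigma> x / h)"
      by (simp add: G_def gamma_fun_def pr ps)
    moreover have "gamma_fun \<rho> \<sigma> x / h \<ge> 0" using that h
      by (auto simp: T_def gamma_fun_def zero_less_mult_iff zero_le_divide_iff mult_nonpos_nonneg)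
    ultimately show ?thesis unfolding F_def f_def using powr_of_real[of "gamma_fun \<rho> \<sigma> x / h" "-c"] by simp
  qed
  have "0 \<in> T" using g0 by (simp add: T_def zero_less_divide_iff zero_less_mult_iff)
  have link: "(deriv ^^ k) (F c) 0 = of_real ((deriv ^^ k) (f c) 0)" for c k
    using real_link[OF holF[of c] oS oT TS eqF[where c=c] \<open>0 \<in> T\<close>, of k] by simp
  have om: "omega \<rho> \<sigma> h c k = (deriv ^^ k) (f c) 0 / fact k" for c k
    by (simp add: omega_def f_def)
  have prod: "(\<lambda>w. F a w * F b w) = F (a + b)"
    by (auto simp: F_def powr_add[symmetric] algebra_simps)
  have "of_real ((deriv ^^ n) (f (a+b)) 0) = (deriv ^^ n) (F (a + b)) (of_real 0)"
    using link by simp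
  also have "\<dots> = (\<Sum>i = 0..n. of_nat (n choose i) * (deriv ^^ i) (F a) 0 * (deriv ^^ (n-i)) (F b) 0)"
    using higher_deriv_mult[OF holF[of a] holF[of b] oS TS[OF \<open>0 \<in> T\<close>], of n] by (simp add: prod)
  also have "\<dots> = of_real (\<Sum>i = 0..n. of_nat (n choose i) * (deriv ^^ i) (f a) 0 * (deriv ^^ (n-i)) (f b) 0)"
    by (simp add: link)
  finally have *: "(deriv ^^ n) (f (a+b)) 0 = (\<Sum>i = 0..n. of_nat (n choose i) * (deriv ^^ i) (f a) 0 * (deriv ^^ (n-i)) (f b) 0)"
    using of_real_eq_iff by blast
  show ?thesis
    unfolding om * sum_divide_distrib
    by (rule sum.cong) (auto simp: binomial_fact)
qed


lemma sum_restr: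
  fixes f :: "nat \<Rightarrow> 'b::comm_monoid_add" and a b N :: nat
  assumes "b \<le> N"
  shows "(\<Sum>i=a..b. f i) = (\<Sum>i=0..N. if a \<le> i \<and> i \<le> b then f i else 0)"
proof -
  have "(\<Sum>i=0..N. if a \<le> i \<and> i \<le> b then f i else 0) = (\<Sum>i\<in>{0..N} \<inter> {i. a \<le> i \<and> i \<le> b}. f i)"
    by (simp add: sum.inter_restrict)
  also have "{0..N} \<inter> {i. a \<le> i \<and> i \<le> b} = {a..b}" using assms by auto
  finally show ?thesis by simp
qed

lemma triple_swap:
  fixes g :: "nat \<Rightarrow> nat \<Rightarrow> nat \<Rightarrow> 'b::comm_monoid_add"
  shows "(\<Sum>k=0..N. \<Sum>i=0..k. \<Sum>j=k..N. g i k j) = (\<Sum>i=0..N. \<Sum>j=i..N. \<Sum>k=i..j. g i k j)"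
proof -
  have "(\<Sum>k=0..N. \<Sum>i=0..k. \<Sum>j=k..N. g i k j) =
        (\<Sum>k=0..N. \<Sum>i=0..N. \<Sum>j=0..N. if i \<le> k \<and> k \<le> j then g i k j else 0)"
  proof (rule sum.cong[OF refl])
    fix k assume k: "k \<in> {0..N}"
    have "(\<Sum>i=0..k. \<Sum>j=k..N. g i k j) = (\<Sum>i=0..N. if 0 \<le> i \<and> i \<le> k then (\<Sum>j=k..N. g i k j) else 0)"
      using k by (intro sum_restr) auto
    also have "\<dots> = (\<Sum>i=0..N. \<Sum>j=0..N. if i \<le> k \<and> k \<le> j then g i k j else 0)"
    proof (rule sum.cong[OF refl])
      fix i
      have "(\<Sum>j=k..N. g i k j) = (\<Sum>j=0..N. if k \<le> j \<and> j \<le> N then g i k j else 0)"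
        by (intro sum_restr) auto
      then show "(if 0 \<le> i \<and> i \<le> k then (\<Sum>j=k..N. g i k j) else 0) = (\<Sum>j=0..N. if i \<le> k \<and> k \<le> j then g i k j else 0)"
        by (auto intro!: sum.cong)
    qed
    finally show "(\<Sum>i=0..k. \<Sum>j=k..N. g i k j) = (\<Sum>i=0..N. \<Sum>j=0..N. if i \<le> k \<and> k \<le> j then g i k j else 0)" .
  qed
  also have "\<dots> = (\<Sum>i=0..N. \<Sum>j=0..N. \<Sum>k=0..N. if i \<le> k \<and> k \<le> j then g i k j else 0)"
    by (subst sum.swap) (rule sum.cong[OF refl], rule sum.swap)
  also have "\<dots> = (\<Sum>i=0..N. \<Sum>j=i..N. \<Sum>k=i..j. g i k j)"
  proof (rule sum.cong[OF refl])
    fix i assume i: "i \<in> {0..N}"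
    have "(\<Sum>j=i..N. \<Sum>k=i..j. g i k j) = (\<Sum>j=0..N. if i \<le> j \<and> j \<le> N then (\<Sum>k=i..j. g i k j) else 0)"
      by (intro sum_restr) auto
    also have "\<dots> = (\<Sum>j=0..N. \<Sum>k=0..N. if i \<le> k \<and> k \<le> j then g i k j else 0)"
    proof (rule sum.cong[OF refl])
      fix j assume j: "j \<in> {0..N}"
      have "(\<Sum>k=i..j. g i k j) = (\<Sum>k=0..N. if i \<le> k \<and> k \<le> j then g i k j else 0)"
        using j by (intro sum_restr) auto
      then show "(if i \<le> j \<and> j \<le> N then (\<Sum>k=i..j. g i k j) else 0) = (\<Sum>k=0..N. if i \<le> k \<and> k \<le> j then g i k j else 0)"
        using j by (auto intro!: sum.neutral)
    qed
    finally show "(\<Sum>j=0..N. \<Sum>k=0..N. if i \<le> k \<and> k \<le> j then g i k j else 0) = (\<Sum>j=i..N. \<Sum>k=i..j. g i k j)" by simp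
  qed
  finally show ?thesis .
qed

lemma double_swap:
  fixes g :: "nat \<Rightarrow> nat \<Rightarrow> 'b::comm_monoid_add"
  shows "(\<Sum>j=0..N. \<Sum>i=0..j. g i j) = (\<Sum>i=0..N. \<Sum>j=i..N. g i j)"
proof -
  have "(\<Sum>j=0..N. \<Sum>i=0..j. g i j) = (\<Sum>j=0..N. \<Sum>i=0..N. if i \<le> j then g i j else 0)"
    by (rule sum.cong[OF refl], subst sum_restr[where N=N]) (auto intro!: sum.cong)
  also have "\<dots> = (\<Sum>i=0..N. \<Sum>j=0..N. if i \<le> j then g i j else 0)"
    by (rule sum.swap)
  also have "\<dots> = (\<Sum>i=0..N. \<Sum>j=i..N. g i j)"
  proof (rule sum.cong[OF refl])
    fix i
    have "(\<Sum>j=i..N. g i j) = (\<Sum>j=0..N. if i \<le> j \<and> j \<le> N then g i j else 0)"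
      by (intro sum_restr) auto
    then show "(\<Sum>j=0..N. if i \<le> j then g i j else 0) = (\<Sum>j=i..N. g i j)"
      by (auto intro!: sum.cong)
  qed
  finally show ?thesis .
qed

lemma left_rev:
  fixes u :: "nat \<Rightarrow> 'a::real_vector"
  shows "(\<Sum>n=0..k. c n *\<^sub>R u (k - n)) = (\<Sum>i=0..k. c (k - i) *\<^sub>R u i)"
  by (subst sum.atLeastAtMost_rev) (auto intro!: sum.cong)

lemma right_shift:
  fixes v :: "nat \<Rightarrow> 'a::real_vector"
  assumes "k \<le> N"
  shows "(\<Sum>m=0..N-k. d m *\<^sub>R v (k + m)) = (\<Sum>j=k..N. d (j - k) *\<^sub>R v j)"
proof -
  have "(\<Sum>j=k..N. d (j - k) *\<^sub>R v j) = (\<Sum>j=0+k..(N-k)+k. d (j - k) *\<^sub>R v j)"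
    using assms by simp
  also have "\<dots> = (\<Sum>m=0..N-k. d m *\<^sub>R v (k + m))"
    by (subst sum.shift_bounds_cl_nat_ivl) (simp add: add.commute)
  finally show ?thesis by simp
qed

lemma conv_shift:
  fixes i j :: nat
  assumes "i \<le> j"
  shows "(\<Sum>k=i..j. (c (k - i) :: real) * d (j - k)) = (\<Sum>t=0..j-i. c t * d (j - i - t))"
proof -
  have "(\<Sum>k=i..j. c (k - i) * d (j - k)) = (\<Sum>k=0+i..(j-i)+i. c (k - i) * d (j - k))"
    using assms by simp
  also have "\<dots> = (\<Sum>t=0..j-i. c t * d (j - i - t))"
    by (subst sum.shift_bounds_cl_nat_ivl) (auto intro!: sum.cong simp: add.commute)
  finally show ?thesis .
qed

lemma pair_formula:
  fixes u v :: "nat \<Rightarrow> 'a::real_inner" and c d :: "nat \<Rightarrow> real"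
  shows "(\<Sum>k=0..N. (\<Sum>n=0..k. c n *\<^sub>R u (k - n)) \<bullet> (\<Sum>m=0..N-k. d m *\<^sub>R v (k + m)))
       = (\<Sum>i=0..N. \<Sum>j=i..N. (\<Sum>t=0..j-i. c t * d (j - i - t)) * (u i \<bullet> v j))"
proof -
  have "(\<Sum>k=0..N. (\<Sum>n=0..k. c n *\<^sub>R u (k - n)) \<bullet> (\<Sum>m=0..N-k. d m *\<^sub>R v (k + m)))
      = (\<Sum>k=0..N. \<Sum>i=0..k. \<Sum>j=k..N. c (k - i) * d (j - k) * (u i \<bullet> v j))"
  proof (rule sum.cong[OF refl])
    fix k assume k: "k \<in> {0..N}"
    then show "(\<Sum>n=0..k. c n *\<^sub>R u (k - n)) \<bullet> (\<Sum>m=0..N-k. d m *\<^sub>R v (k + m)) = (\<Sum>i=0..k. \<Sum>j=k..N. c (k - i) * d (j - k) * (u i \<bullet> v j))"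
      by (simp only: left_rev right_shift[of k N] atLeastAtMost_iff inner_sum_left inner_sum_right)
         (subst sum.swap, simp add: mult.assoc mult.left_commute)
  qed
  also have "\<dots> = (\<Sum>i=0..N. \<Sum>j=i..N. \<Sum>k=i..j. c (k - i) * d (j - k) * (u i \<bullet> v j))"
    by (rule triple_swap)
  also have "\<dots> = (\<Sum>i=0..N. \<Sum>j=i..N. (\<Sum>t=0..j-i. c t * d (j - i - t)) * (u i \<bullet> v j))"
    by (intro sum.cong refl) (simp add: conv_shift sum_distrib_right[symmetric])
  finally show ?thesis .
qed

lemma left_formula:
  fixes u w :: "nat \<Rightarrow> 'a::real_inner" and e :: "nat \<Rightarrow> real"
  shows "(\<Sum>k=0..N. (\<Sum>n=0..k. e n *\<^sub>R u (k - n)) \<bullet> w k)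
       = (\<Sum>i=0..N. \<Sum>j=i..N. e (j - i) * (u i \<bullet> w j))"
proof -
  have "(\<Sum>k=0..N. (\<Sum>n=0..k. e n *\<^sub>R u (k - n)) \<bullet> w k) = (\<Sum>k=0..N. \<Sum>i=0..k. e (k - i) * (u i \<bullet> w k))"
    by (rule sum.cong[OF refl]) (simp add: left_rev inner_sum_left)
  also have "\<dots> = (\<Sum>i=0..N. \<Sum>j=i..N. e (j - i) * (u i \<bullet> w j))"
    by (rule double_swap)
  finally show ?thesis .
qed

lemma right_formula:
  fixes v w :: "nat \<Rightarrow> 'a::real_inner" and e :: "nat \<Rightarrow> real"
  shows "(\<Sum>k=0..N. w k \<bullet> (\<Sum>m=0..N-k. e m *\<^sub>R v (k + m)))
       = (\<Sum>i=0..N. \<Sum>j=i..N. e (j - i) * (w i \<bullet> v j))"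
  by (rule sum.cong[OF refl]) (simp add: right_shift inner_sum_right)



lemma by_parts:
  fixes P Q dx :: "nat \<Rightarrow> 'a::real_inner"
  assumes "dx 0 = 0" "dx (Suc M) = 0"
  shows "(\<Sum>k<Suc M. P k \<bullet> dx k + Q k \<bullet> dx (Suc k)) = (\<Sum>k=1..M. (P k + Q (k - 1)) \<bullet> dx k)"
proof -
  have 1: "(\<Sum>k<Suc M. P k \<bullet> dx k) = (\<Sum>k=1..M. P k \<bullet> dx k)"
    using assms by (simp add: sum.lessThan_Suc_shift sum.atLeast1_atMost_eq del: sum.lessThan_Suc)
  have 2: "(\<Sum>k<Suc M. Q k \<bullet> dx (Suc k)) = (\<Sum>k=1..M. Q (k - 1) \<bullet> dx k)"
    using assms by (simp add: sum.atLeast1_atMost_eq)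
  show ?thesis using 1 2 by (simp add: sum.distrib inner_add_left)
qed

lemma L_dir:
  fixes L :: "'a::euclidean_space \<Rightarrow> 'a \<Rightarrow> real"
  assumes L_deriv: "\<And>u v. ((\<lambda>p. L (fst p) (snd p)) has_derivative
                     (\<lambda>q. D1 u v \<bullet> fst q + D2 u v \<bullet> snd q)) (at (u, v))"
  shows "((\<lambda>\<epsilon>. L (u + \<epsilon> *\<^sub>R du) (v + \<epsilon> *\<^sub>R dv)) has_real_derivative (D1 u v \<bullet> du + D2 u v \<bullet> dv)) (at 0)"
proof -
  have f: "((\<lambda>\<epsilon>::real. (u + \<epsilon> *\<^sub>R du, v + \<epsilon> *\<^sub>R dv)) has_derivative (\<lambda>t. (t *\<^sub>R du, t *\<^sub>R dv))) (at 0)"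
    by (auto intro!: derivative_eq_intros)
  have g: "((\<lambda>p. L (fst p) (snd p)) has_derivative (\<lambda>q. D1 u v \<bullet> fst q + D2 u v \<bullet> snd q))
      (at ((\<lambda>\<epsilon>::real. (u + \<epsilon> *\<^sub>R du, v + \<epsilon> *\<^sub>R dv)) 0))"
    using L_deriv[of u v] by simp
  have "((\<lambda>\<epsilon>. L (u + \<epsilon> *\<^sub>R du) (v + \<epsilon> *\<^sub>R dv)) has_derivative (\<lambda>t. t * (D1 u v \<bullet> du + D2 u v \<bullet> dv))) (at 0)"
    using has_derivative_compose[OF f g] by (simp add: algebra_simps)
  then show ?thesis unfolding has_field_derivative_def by (rule has_derivative_eq_rhs) (auto simp: fun_eq_iff mult.commute)
qed

lemma inner_lin_deriv:
  fixes a b c d :: "'a::real_inner"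
  shows "((\<lambda>\<epsilon>. (a + \<epsilon> *\<^sub>R b) \<bullet> (c + \<epsilon> *\<^sub>R d)) has_real_derivative (b \<bullet> c + a \<bullet> d)) (at 0)"
proof -
  have e: "(\<lambda>\<epsilon>. (a + \<epsilon> *\<^sub>R b) \<bullet> (c + \<epsilon> *\<^sub>R d)) = (\<lambda>\<epsilon>. a \<bullet> c + \<epsilon> * (b \<bullet> c + a \<bullet> d) + \<epsilon> * \<epsilon> * (b \<bullet> d))"
    by (auto simp: inner_add_left inner_add_right algebra_simps)
  show ?thesis unfolding e
    by (auto intro!: derivative_eq_intros)
qed

lemma Jminus_lin: "Jminus \<rho> \<sigma> h a (\<lambda>k. x k + \<epsilon> *\<^sub>R dx k) k = Jminus \<rho> \<sigma> h a x k + \<epsilon> *\<^sub>R Jminus \<rho> \<sigma> h a dx k"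
  by (simp add: Jminus_def scaleR_add_right sum.distrib scaleR_sum_right mult.commute)

lemma Jplus_lin: "Jplus \<rho> \<sigma> h N a (\<lambda>k. x k + \<epsilon> *\<^sub>R dx k) k = Jplus \<rho> \<sigma> h N a x k + \<epsilon> *\<^sub>R Jplus \<rho> \<sigma> h N a dx k"
  by (simp add: Jplus_def scaleR_add_right sum.distrib scaleR_sum_right mult.commute)



lemma extend_sum:
  fixes f :: "nat \<Rightarrow> real"
  assumes "f 0 = 0" "f (Suc M) = 0"
  shows "(\<Sum>k=1..M. f k) = (\<Sum>k=0..Suc M. f k)"
  using assms by (simp add: sum.atLeast0_atMost_Suc sum.atLeast_Suc_atMost[of 0 M])

theorem theorem4p2:
  fixes L :: "'a::euclidean_space \<Rightarrow> 'a \<Rightarrow> real"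
    and D1 D2 :: "'a \<Rightarrow> 'a \<Rightarrow> 'a"
    and \<rho> \<sigma> :: "real poly"
    and h \<mu> \<alpha> \<beta> :: real and N :: nat
    and x y dx :: "nat \<Rightarrow> 'a"
  assumes h_pos: "h > 0" and mu_pos: "\<mu> > 0"
    and alpha: "0 \<le> \<alpha>" "\<alpha> \<le> 1/2" and beta: "0 \<le> \<beta>" "\<beta> \<le> 1/2"
    and gamma0: "poly \<rho> 0 / poly \<sigma> 0 > 0"
    and L_deriv: "\<And>u v. ((\<lambda>p. L (fst p) (snd p)) has_derivative
                     (\<lambda>q. D1 u v \<bullet> fst q + D2 u v \<bullet> snd q)) (at (u, v))"
    and D1_cont: "continuous_on UNIV (\<lambda>p. D1 (fst p) (snd p))"
    and D2_cont: "continuous_on UNIV (\<lambda>p. D2 (fst p) (snd p))"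
    and EL_x: "\<And>k. 1 \<le> k \<Longrightarrow> k \<le> N - 1 \<Longrightarrow>
       D1 (x k) (x (k + 1)) + D2 (x (k - 1)) (x k) = (\<mu> * h) *\<^sub>R Jminus \<rho> \<sigma> h (- (\<alpha> + \<beta>)) x k"
    and EL_y: "\<And>k. 1 \<le> k \<Longrightarrow> k \<le> N - 1 \<Longrightarrow>
       D1 (y k) (y (k + 1)) + D2 (y (k - 1)) (y k) = (\<mu> * h) *\<^sub>R Jplus \<rho> \<sigma> h N (- (\<alpha> + \<beta>)) y k"
    and dx0: "dx 0 = 0" and dxN: "dx N = 0"
  shows "((\<lambda>\<epsilon>. action L \<rho> \<sigma> h N \<mu> \<alpha> \<beta> (\<lambda>k. x k + \<epsilon> *\<^sub>R dx k) (\<lambda>k. y k + \<epsilon> *\<^sub>R dx k))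
           has_real_derivative 0) (at 0)"
proof -
  define Jm where "Jm a (u :: nat \<Rightarrow> 'a) = Jminus \<rho> \<sigma> h a u" for a u
  define Jp where "Jp a (v :: nat \<Rightarrow> 'a) = Jplus \<rho> \<sigma> h N a v" for a v
  define Ax where "Ax k = D1 (x k) (x (Suc k)) \<bullet> dx k + D2 (x k) (x (Suc k)) \<bullet> dx (Suc k)" for k
  define Ay where "Ay k = D1 (y k) (y (Suc k)) \<bullet> dx k + D2 (y k) (y (Suc k)) \<bullet> dx (Suc k)" for k
  define B where "B k = Jm (-\<alpha>) dx k \<bullet> Jp (-\<beta>) y k + Jm (-\<alpha>) x k \<bullet> Jp (-\<beta>) dx k" for k
  have eq: "(\<lambda>\<epsilon>. action L \<rho> \<sigma> h N \<mu> \<alpha> \<beta> (\<lambda>k. x k + \<epsilon> *\<^sub>R dx k) (\<lambda>k. y k + \<epsilon> *\<^sub>R dx k)) =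
     (\<lambda>\<epsilon>. (\<Sum>k<N. L (x k + \<epsilon> *\<^sub>R dx k) (x (Suc k) + \<epsilon> *\<^sub>R dx (Suc k))
                  + L (y k + \<epsilon> *\<^sub>R dx k) (y (Suc k) + \<epsilon> *\<^sub>R dx (Suc k)))
          - \<mu> * h * (\<Sum>k=0..N. (Jm (-\<alpha>) x k + \<epsilon> *\<^sub>R Jm (-\<alpha>) dx k) \<bullet> (Jp (-\<beta>) y k + \<epsilon> *\<^sub>R Jp (-\<beta>) dx k)))"
    by (simp add: action_def Jminus_lin Jplus_lin Jm_def Jp_def)
  have der: "((\<lambda>\<epsilon>. action L \<rho> \<sigma> h N \<mu> \<alpha> \<beta> (\<lambda>k. x k + \<epsilon> *\<^sub>R dx k) (\<lambda>k. y k + \<epsilon> *\<^sub>R dx k))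
      has_real_derivative ((\<Sum>k<N. Ax k + Ay k) - \<mu> * h * (\<Sum>k=0..N. B k))) (at 0)"
    unfolding eq Ax_def Ay_def B_def
    by (intro DERIV_diff DERIV_sum DERIV_add DERIV_cmult L_dir[OF L_deriv] inner_lin_deriv)
  have conv: "omega \<rho> \<sigma> h (- (\<alpha> + \<beta>)) n = (\<Sum>i=0..n. omega \<rho> \<sigma> h (-\<alpha>) i * omega \<rho> \<sigma> h (-\<beta>) (n - i))" for n
    using omega_conv[OF h_pos gamma0, of "-\<alpha>" "-\<beta>" n] by simp
  have F1: "(\<Sum>k=0..N. Jm (-\<alpha>) x k \<bullet> Jp (-\<beta>) dx k) = (\<Sum>k=0..N. Jm (-(\<alpha>+\<beta>)) x k \<bullet> dx k)"
    unfolding Jm_def Jp_def Jminus_def Jplus_def pair_formula left_formula by (simp only: conv)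
  have F2: "(\<Sum>k=0..N. Jm (-\<alpha>) dx k \<bullet> Jp (-\<beta>) y k) = (\<Sum>k=0..N. dx k \<bullet> Jp (-(\<alpha>+\<beta>)) y k)"
    unfolding Jm_def Jp_def Jminus_def Jplus_def pair_formula right_formula by (simp only: conv)
  have F3: "(\<Sum>k<N. Ax k) = \<mu> * h * (\<Sum>k=0..N. Jm (-(\<alpha>+\<beta>)) x k \<bullet> dx k)"
       and F4: "(\<Sum>k<N. Ay k) = \<mu> * h * (\<Sum>k=0..N. dx k \<bullet> Jp (-(\<alpha>+\<beta>)) y k)"
  proof -
    have "(\<Sum>k<N. Ax k) = \<mu> * h * (\<Sum>k=0..N. Jm (-(\<alpha>+\<beta>)) x k \<bullet> dx k) \<and>
          (\<Sum>k<N. Ay k) = \<mu> * h * (\<Sum>k=0..N. dx k \<bullet> Jp (-(\<alpha>+\<beta>)) y k)"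
    proof (cases N)
      case 0
      then show ?thesis using dx0 by simp
    next
      case (Suc M)
      have dxM: "dx (Suc M) = 0" using dxN Suc by simp
      have "(\<Sum>k<N. Ax k) = (\<Sum>k=1..M. (D1 (x k) (x (Suc k)) + D2 (x (k - 1)) (x (Suc (k - 1)))) \<bullet> dx k)"
        unfolding Suc Ax_def by (rule by_parts[OF dx0 dxM])
      also have "\<dots> = (\<Sum>k=1..M. \<mu> * h * (Jm (-(\<alpha>+\<beta>)) x k \<bullet> dx k))"
      proof (rule sum.cong[OF refl])
        fix k assume k: "k \<in> {1..M}"
        then have "Suc (k - 1) = k" by auto
        then show "(D1 (x k) (x (Suc k)) + D2 (x (k - 1)) (x (Suc (k - 1)))) \<bullet> dx k = \<mu> * h * (Jm (-(\<alpha>+\<beta>)) x k \<bullet> dx k)"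
          using EL_x[of k] k Suc by (simp add: Jm_def)
      qed
      also have "\<dots> = (\<Sum>k=0..N. \<mu> * h * (Jm (-(\<alpha>+\<beta>)) x k \<bullet> dx k))"
        unfolding Suc by (rule extend_sum) (simp_all add: dx0 dxM)
      finally have X: "(\<Sum>k<N. Ax k) = \<mu> * h * (\<Sum>k=0..N. Jm (-(\<alpha>+\<beta>)) x k \<bullet> dx k)"
        by (simp add: sum_distrib_left)
      have "(\<Sum>k<N. Ay k) = (\<Sum>k=1..M. (D1 (y k) (y (Suc k)) + D2 (y (k - 1)) (y (Suc (k - 1)))) \<bullet> dx k)"
        unfolding Suc Ay_def by (rule by_parts[OF dx0 dxM])
      also have "\<dots> = (\<Sum>k=1..M. \<mu> * h * (dx k \<bullet> Jp (-(\<alpha>+\<beta>)) y k))"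
      proof (rule sum.cong[OF refl])
        fix k assume k: "k \<in> {1..M}"
        then have "Suc (k - 1) = k" by auto
        then show "(D1 (y k) (y (Suc k)) + D2 (y (k - 1)) (y (Suc (k - 1)))) \<bullet> dx k = \<mu> * h * (dx k \<bullet> Jp (-(\<alpha>+\<beta>)) y k)"
          using EL_y[of k] k Suc by (simp add: Jp_def inner_commute)
      qed
      also have "\<dots> = (\<Sum>k=0..N. \<mu> * h * (dx k \<bullet> Jp (-(\<alpha>+\<beta>)) y k))"
        unfolding Suc by (rule extend_sum) (simp_all add: dx0 dxM)
      finally have Y: "(\<Sum>k<N. Ay k) = \<mu> * h * (\<Sum>k=0..N. dx k \<bullet> Jp (-(\<alpha>+\<beta>)) y k)"
        by (simp add: sum_distrib_left)
      show ?thesis using X Y by simp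
    qed
    then show "(\<Sum>k<N. Ax k) = \<mu> * h * (\<Sum>k=0..N. Jm (-(\<alpha>+\<beta>)) x k \<bullet> dx k)"
          and "(\<Sum>k<N. Ay k) = \<mu> * h * (\<Sum>k=0..N. dx k \<bullet> Jp (-(\<alpha>+\<beta>)) y k)" by auto
  qed
  have "(\<Sum>k<N. Ax k + Ay k) - \<mu> * h * (\<Sum>k=0..N. B k) = 0"
    unfolding B_def sum.distrib F1 F2 F3 F4 by (simp add: algebra_simps)
  then show ?thesis using der by simp
qed

end
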